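(* Let $\phi(x)=\psi_0(\psi_1(x),\dots,\psi_n(x))$ where $\psi_0(y_1,\dots,y_n)$ is an IPC formula in which each $y_i$ is negative, and each $\psi_i$ ($1\le i\le n$) is an IPC formula in which $x$ is negative (all formulas may contain further parameter variables). Let $H$ be a Heyting algebra and $v$ a valuation of the parameters in $H$; write $\psi_j$ also for the induced functions. Then the monotone map $G:H^n\to H^n$, $G(\vec y)=(\psi_1(\psi_0(\vec y)),\dots,\psi_n(\psi_0(\vec y)))$, has a greatest fixed point $(\nu_1,\dots,\nu_n)$ (coordinatewise order), the map $F(h)=[\![\phi]\!]_{(v,h/x)}$ has a least fixed point, and $\mu.F=\psi_0(\nu_1,\dots,\nu_n)$.
   Context: An occurrence of a variable is negative in a formula if the path in the syntax tree from the root to it passes through an odd number of nodes labelled by an implication $\chi_1\to\chi_2$ whose successor on the path is $\chi_1$; a variable is negative in a formula if all its occurrences are negative. *)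

theory Defs
  imports Main
begin

class heyting_algebra = bounded_lattice +
  fixes himp :: "'a \<Rightarrow> 'a \<Rightarrow> 'a"  (infixr \<open>\<leadsto>\<close> 25)
  assumes himp_residuation: "inf x y \<le> z \<longleftrightarrow> x \<le> (y \<leadsto> z)"

datatype 'v fm =
    Var 'v
  | Bot
  | Top
  | Conj "'v fm" "'v fm"
  | Disj "'v fm" "'v fm"
  | Imp "'v fm" "'v fm"

text \<open>Negation is the abbreviation Imp phi Bot.\<close>

fun vars :: "'v fm \<Rightarrow> 'v set" where
  "vars (Var w) = {w}"
| "vars Bot = {}"
| "vars Top = {}"
| "vars (Conj a b) = vars a \<union> vars b"
| "vars (Disj a b) = vars a \<union> vars b"
| "vars (Imp a b) = vars a \<union> vars b"

text \<open>occ p x phi: x has an occurrence in phi whose polarity is p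
  (True = positive, i.e. an even number of left-of-implication steps
  on the path from the root; False = negative, odd number).\<close>

fun occ :: "bool \<Rightarrow> 'v \<Rightarrow> 'v fm \<Rightarrow> bool" where
  "occ p x (Var w) = (p \<and> x = w)"
| "occ p x Bot = False"
| "occ p x Top = False"
| "occ p x (Conj a b) = (occ p x a \<or> occ p x b)"
| "occ p x (Disj a b) = (occ p x a \<or> occ p x b)"
| "occ p x (Imp a b) = (occ (\<not> p) x a \<or> occ p x b)"

definition negative_in :: "'v \<Rightarrow> 'v fm \<Rightarrow> bool" where
  "negative_in x phi \<longleftrightarrow> \<not> occ True x phi"

fun eval :: "('v \<Rightarrow> 'a::heyting_algebra) \<Rightarrow> 'v fm \<Rightarrow> 'a" where
  "eval v (Var w) = v w"
| "eval v Bot = bot"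
| "eval v Top = top"
| "eval v (Conj a b) = inf (eval v a) (eval v b)"
| "eval v (Disj a b) = sup (eval v a) (eval v b)"
| "eval v (Imp a b) = (eval v a \<leadsto> eval v b)"

fun subst :: "('v \<Rightarrow> 'v fm) \<Rightarrow> 'v fm \<Rightarrow> 'v fm" where
  "subst s (Var w) = s w"
| "subst s Bot = Bot"
| "subst s Top = Top"
| "subst s (Conj a b) = Conj (subst s a) (subst s b)"
| "subst s (Disj a b) = Disj (subst s a) (subst s b)"
| "subst s (Imp a b) = Imp (subst s a) (subst s b)"

text \<open>Composite formula psi0(psi_1,...,psi_n): replace y i by psi i for i in {1..n}.\<close>

definition compose_fm :: "'v fm \<Rightarrow> nat \<Rightarrow> (nat \<Rightarrow> 'v) \<Rightarrow> (nat \<Rightarrow> 'v fm) \<Rightarrow> 'v fm" where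
  "compose_fm psi0 n y psi =
     subst (\<lambda>w. if w \<in> y ` {1..n} then psi (the_inv_into {1..n} y w) else Var w) psi0"

definition assign :: "('v \<Rightarrow> 'a) \<Rightarrow> nat \<Rightarrow> (nat \<Rightarrow> 'v) \<Rightarrow> (nat \<Rightarrow> 'a) \<Rightarrow> 'v \<Rightarrow> 'a" where
  "assign v n y h = (\<lambda>w. if w \<in> y ` {1..n} then h (the_inv_into {1..n} y w) else v w)"

text \<open>Vectors in H^n are represented as functions nat => H; only coordinates 1..n matter.\<close>

definition vec_le :: "nat \<Rightarrow> (nat \<Rightarrow> 'a::order) \<Rightarrow> (nat \<Rightarrow> 'a) \<Rightarrow> bool" where
  "vec_le n a b \<longleftrightarrow> (\<forall>i\<in>{1..n}. a i \<le> b i)"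

definition vec_eq :: "nat \<Rightarrow> (nat \<Rightarrow> 'a) \<Rightarrow> (nat \<Rightarrow> 'a) \<Rightarrow> bool" where
  "vec_eq n a b \<longleftrightarrow> (\<forall>i\<in>{1..n}. a i = b i)"

end

theory Submission
  imports Defs
begin

lemma res: "inf x y \<le> z \<longleftrightarrow> x \<le> (y \<leadsto> (z::'a::heyting_algebra))"
  by (rule himp_residuation)

lemma mp_le: "inf (y \<leadsto> z) y \<le> (z::'a::heyting_algebra)"
  using res[of "y \<leadsto> z" y z] by simp

lemma strength:
  "(\<forall>w. (occ True w phi \<longrightarrow> inf d (v w) \<le> v' w) \<and> (occ False w phi \<longrightarrow> inf d (v' w) \<le> v w))
   \<Longrightarrow> inf d (eval v phi) \<le> (eval v' phi :: 'a::heyting_algebra)"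
proof (induction phi arbitrary: v v')
  case (Var w) then show ?case by simp
next
  case Bot then show ?case by simp
next
  case Top then show ?case by simp
next
  case (Conj a b)
  have 1: "inf d (eval v a) \<le> eval v' a" using Conj.IH(1)[of v v'] Conj.prems by auto
  have 2: "inf d (eval v b) \<le> eval v' b" using Conj.IH(2)[of v v'] Conj.prems by auto
  have x1: "inf d (inf (eval v a) (eval v b)) \<le> inf d (eval v a)" by (rule inf_mono[OF order_refl inf_le1])
  have x2: "inf d (inf (eval v a) (eval v b)) \<le> inf d (eval v b)" by (rule inf_mono[OF order_refl inf_le2])
  have y1: "inf d (inf (eval v a) (eval v b)) \<le> eval v' a" using x1 1 by (rule order_trans)
  have y2: "inf d (inf (eval v a) (eval v b)) \<le> eval v' b" using x2 2 by (rule order_trans)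
  show ?case using y1 y2 by simp
next
  case (Disj a b)
  have 1: "inf d (eval v a) \<le> eval v' a" using Disj.IH(1)[of v v'] Disj.prems by auto
  have 2: "inf d (eval v b) \<le> eval v' b" using Disj.IH(2)[of v v'] Disj.prems by auto
  let ?C = "sup (eval v' a) (eval v' b)"
  have "inf (eval v a) d \<le> ?C" using order_trans[OF eq_refl[OF inf_commute] 1] by (rule le_supI1)
  hence a: "eval v a \<le> (d \<leadsto> ?C)" by (rule res[THEN iffD1])
  have "inf (eval v b) d \<le> ?C" using order_trans[OF eq_refl[OF inf_commute] 2] by (rule le_supI2)
  hence b: "eval v b \<le> (d \<leadsto> ?C)" by (rule res[THEN iffD1])
  have "sup (eval v a) (eval v b) \<le> (d \<leadsto> ?C)" using a b by simp
  hence "inf (sup (eval v a) (eval v b)) d \<le> ?C" by (rule res[THEN iffD2])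
  then show ?case by (simp add: inf_commute)
next
  case (Imp a b)
  have 1: "inf d (eval v' a) \<le> eval v a" using Imp.IH(1)[of v' v] Imp.prems by auto
  have 2: "inf d (eval v b) \<le> eval v' b" using Imp.IH(2)[of v v'] Imp.prems by auto
  let ?A = "eval v a" and ?B = "eval v b" and ?A' = "eval v' a" and ?B' = "eval v' b"
  have "inf (inf d (?A \<leadsto> ?B)) ?A' \<le> inf d (inf (?A \<leadsto> ?B) ?A)"
  proof -
    have "inf (inf d (?A \<leadsto> ?B)) ?A' \<le> inf d ?A'" by (rule inf_mono[OF inf_le1 order_refl])
    hence "inf (inf d (?A \<leadsto> ?B)) ?A' \<le> ?A" by (rule order_trans[OF _ 1])
    moreover have "inf (inf d (?A \<leadsto> ?B)) ?A' \<le> d" by (rule order_trans[OF inf_le1 inf_le1])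
    moreover have "inf (inf d (?A \<leadsto> ?B)) ?A' \<le> (?A \<leadsto> ?B)" by (rule order_trans[OF inf_le1 inf_le2])
    ultimately show ?thesis by simp
  qed
  also have "\<dots> \<le> inf d ?B" by (rule inf_mono[OF order_refl mp_le])
  also have "\<dots> \<le> ?B'" by (rule 2)
  finally have "inf d (?A \<leadsto> ?B) \<le> (?A' \<leadsto> ?B')" by (rule res[THEN iffD1])
  then show ?case by simp
qed

lemma eval_cong: "(\<forall>w\<in>vars phi. v w = v' w) \<Longrightarrow> eval v phi = eval v' phi"
  by (induction phi) auto

lemma eval_subst: "eval v (subst s phi) = eval (\<lambda>w. eval v (s w)) phi"
  by (induction phi) auto

lemma Psi0_strength:
  assumes inj: "inj_on y {1..n}"
    and neg: "\<And>i. i \<in> {1..n} \<Longrightarrow> negative_in (y i) psi0"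
    and le: "\<forall>i\<in>{1..n}. inf d (h' i) \<le> h i"
  shows "inf d (eval (assign v n y h) psi0) \<le> (eval (assign v n y h') psi0 :: 'a::heyting_algebra)"
proof (rule strength, intro allI conjI impI)
  fix w assume o: "occ True w psi0"
  have "w \<notin> y ` {1..n}" using o neg unfolding negative_in_def by blast
  then show "inf d (assign v n y h w) \<le> assign v n y h' w" by (simp add: assign_def)
next
  fix w assume o: "occ False w psi0"
  show "inf d (assign v n y h' w) \<le> assign v n y h w"
  proof (cases "w \<in> y ` {1..n}")
    case True
    then obtain i where i: "i \<in> {1..n}" "w = y i" by blast
    have "the_inv_into {1..n} y w = i" using i inj by (simp add: the_inv_into_f_f)
    then show ?thesis using True le i by (simp add: assign_def)
  next
    case False then show ?thesis by (simp add: assign_def)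
  qed
qed

theorem mainTheorem16:
  fixes psi0 :: "'v fm" and psi :: "nat \<Rightarrow> 'v fm" and n :: nat
    and x :: 'v and y :: "nat \<Rightarrow> 'v" and v :: "'v \<Rightarrow> 'a::heyting_algebra"
  assumes y_inj: "inj_on y {1..n}"
    and x_not_y: "x \<notin> y ` {1..n}"
    and x_not_in_psi0: "x \<notin> vars psi0"
    and y_not_in_psi: "\<And>i j. i \<in> {1..n} \<Longrightarrow> j \<in> {1..n} \<Longrightarrow> y j \<notin> vars (psi i)"
    and y_neg: "\<And>i. i \<in> {1..n} \<Longrightarrow> negative_in (y i) psi0"
    and x_neg: "\<And>i. i \<in> {1..n} \<Longrightarrow> negative_in x (psi i)"
  defines "G \<equiv> (\<lambda>h i. eval (v(x := eval (assign v n y h) psi0)) (psi i))"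
    and "F \<equiv> (\<lambda>a. eval (v(x := a)) (compose_fm psi0 n y psi))"
  shows "(\<forall>a b. vec_le n a b \<longrightarrow> vec_le n (G a) (G b))
    \<and> (\<exists>\<nu>. vec_eq n (G \<nu>) \<nu>
          \<and> (\<forall>\<mu>. vec_eq n (G \<mu>) \<mu> \<longrightarrow> vec_le n \<mu> \<nu>)
          \<and> F (eval (assign v n y \<nu>) psi0) = eval (assign v n y \<nu>) psi0
          \<and> (\<forall>a. F a = a \<longrightarrow> eval (assign v n y \<nu>) psi0 \<le> a))"
proof -
  define P0 where "P0 = (\<lambda>h. eval (assign v n y h) psi0)"
  define P where "P = (\<lambda>a i. eval (v(x := a)) (psi i))"
  have G_eq: "G = (\<lambda>h. P (P0 h))" by (simp add: G_def P0_def P_def)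
  have F_eq: "\<And>a. F a = P0 (P a)"
  proof -
    fix a
    have "F a = eval (\<lambda>w. eval (v(x := a)) (if w \<in> y ` {1..n} then psi (the_inv_into {1..n} y w) else Var w)) psi0"
      by (simp add: F_def compose_fm_def eval_subst)
    also have "\<dots> = P0 (P a)" unfolding P0_def
    proof (rule eval_cong, intro ballI)
      fix w assume "w \<in> vars psi0"
      hence "w \<noteq> x" using x_not_in_psi0 by blast
      then show "eval (v(x := a)) (if w \<in> y ` {1..n} then psi (the_inv_into {1..n} y w) else Var w) = assign v n y (P a) w"
        by (simp add: assign_def P_def)
    qed
    finally show "F a = P0 (P a)" .
  qed
  have P0_str: "\<And>(d::'a) h h'. (\<forall>i\<in>{1..n}. inf d (h' i) \<le> h i) \<Longrightarrow> inf d (P0 h) \<le> P0 h'"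
    unfolding P0_def using Psi0_strength[OF y_inj y_neg] by blast
  have P_str: "\<And>i (d::'a) a a'. i \<in> {1..n} \<Longrightarrow> inf d a' \<le> a \<Longrightarrow> inf d (P a i) \<le> P a' i"
  proof -
    fix i and d a a' :: 'a assume i: "i \<in> {1..n}" and le: "inf d a' \<le> a"
    show "inf d (P a i) \<le> P a' i" unfolding P_def
    proof (rule strength, intro allI conjI impI)
      fix w assume "occ True w (psi i)"
      hence "w \<noteq> x" using x_neg[OF i] unfolding negative_in_def by blast
      then show "inf d ((v(x := a)) w) \<le> (v(x := a')) w" by simp
    next
      fix w assume "occ False w (psi i)"
      show "inf d ((v(x := a')) w) \<le> (v(x := a)) w" using le by (cases "w = x") auto
    qed
  qed
  have P0_anti: "\<And>a b. vec_le n a b \<Longrightarrow> P0 b \<le> P0 a"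
    using P0_str[of top] unfolding vec_le_def by simp
  have P_anti: "\<And>(a::'a) b i. a \<le> b \<Longrightarrow> i \<in> {1..n} \<Longrightarrow> P b i \<le> P a i"
    using P_str[of _ top] by simp
  have P0_cong: "\<And>a b. vec_eq n a b \<Longrightarrow> P0 a = P0 b"
    using P0_anti unfolding vec_eq_def vec_le_def by (metis order.antisym order_refl)
  have mono: "\<And>a b. vec_le n a b \<Longrightarrow> vec_le n (G a) (G b)"
    unfolding G_eq vec_le_def using P0_anti P_anti unfolding vec_le_def by blast
  define u where "u = (\<lambda>k. ((\<lambda>h. P (P0 h)) ^^ k) (\<lambda>_. top))"
  have u0: "u 0 = (\<lambda>_. top)" by (simp add: u_def)
  have uS: "\<And>k. u (Suc k) = P (P0 (u k))" by (simp add: u_def)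
  define c where "c = (\<lambda>k. P0 (u k))"
  have uS': "\<And>k. u (Suc k) = P (c k)" by (simp add: uS c_def)
  have u_dec: "\<And>k. vec_le n (u (Suc k)) (u k)"
  proof -
    fix k show "vec_le n (u (Suc k)) (u k)"
    proof (induction k)
      case 0 show ?case by (simp add: vec_le_def u0)
    next
      case (Suc k) then show ?case using mono[of "u (Suc k)" "u k"] by (simp add: G_eq uS)
    qed
  qed
  have R: "\<forall>e. n \<le> card {i\<in>{1..n}. e \<le> u (Suc k) i} + k \<longrightarrow> inf e (c (Suc k)) \<le> c k" for k
  proof (induction k)
    case 0
    show ?case
    proof (intro allI impI)
      fix e assume cd: "n \<le> card {i\<in>{1..n}. e \<le> u (Suc 0) i} + 0"
      have "{i\<in>{1..n}. e \<le> u (Suc 0) i} = {1..n}"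
        using cd by (intro card_seteq) auto
      hence all: "\<forall>i\<in>{1..n}. inf (inf e (c (Suc 0))) (u 0 i) \<le> u (Suc 0) i"
        by (metis (mono_tags, lifting) inf_le1 mem_Collect_eq order_trans)
      have "inf (inf e (c (Suc 0))) (c (Suc 0)) \<le> c 0"
        using P0_str[OF all] by (simp add: c_def)
      then show "inf e (c (Suc 0)) \<le> c 0" by (simp add: inf_assoc)
    qed
  next
    case (Suc m)
    let ?k = "Suc m"
    show ?case
    proof (intro allI impI)
      fix e assume cd: "n \<le> card {i\<in>{1..n}. e \<le> u (Suc ?k) i} + ?k"
      define D where "D = {i\<in>{1..n}. e \<le> u (Suc ?k) i}"
      have all: "\<forall>i\<in>{1..n}. inf (inf e (c (Suc ?k))) (u ?k i) \<le> u (Suc ?k) i"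
      proof
        fix i assume i: "i \<in> {1..n}"
        show "inf (inf e (c (Suc ?k))) (u ?k i) \<le> u (Suc ?k) i"
        proof (cases "e \<le> u (Suc ?k) i")
          case True then show ?thesis by (meson inf_le1 order_trans)
        next
          case False
          define e' where "e' = inf e (u ?k i)"
          have sub: "insert i D \<subseteq> {i'\<in>{1..n}. e' \<le> u (Suc m) i'}"
          proof
            fix i' assume "i' \<in> insert i D"
            then show "i' \<in> {i'\<in>{1..n}. e' \<le> u (Suc m) i'}"
            proof
              assume "i' = i" then show ?thesis using i by (simp add: e'_def)
            next
              assume "i' \<in> D"
              hence "i' \<in> {1..n}" "e \<le> u (Suc ?k) i'" by (auto simp: D_def)
              moreover have "u (Suc ?k) i' \<le> u ?k i'" using u_dec[of ?k] \<open>i' \<in> {1..n}\<close> by (simp add: vec_le_def)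
              ultimately show ?thesis by (simp add: e'_def le_infI1)
            qed
          qed
          have "i \<notin> D" using False by (simp add: D_def)
          moreover have "finite D" by (simp add: D_def)
          ultimately have "card (insert i D) = card D + 1" by simp
          moreover have "card (insert i D) \<le> card {i'\<in>{1..n}. e' \<le> u (Suc m) i'}"
            by (rule card_mono[OF _ sub]) simp
          ultimately have "n \<le> card {i'\<in>{1..n}. e' \<le> u (Suc m) i'} + m" using cd D_def by simp
          hence ih: "inf e' (c ?k) \<le> c m" using Suc.IH by blast
          have "inf (inf (inf e (c (Suc ?k))) (u ?k i)) (c ?k) \<le> inf e' (c ?k)"
            unfolding e'_def by (meson inf_mono inf_le1 inf_le2 le_infI order_trans order_refl)
          hence "inf (inf (inf e (c (Suc ?k))) (u ?k i)) (c ?k) \<le> c m"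
            using ih by (rule order_trans)
          hence X1: "inf (inf e (c (Suc ?k))) (u ?k i) \<le> (c ?k \<leadsto> c m)"
            by (rule res[THEN iffD1])
          have X2: "inf (c ?k \<leadsto> c m) (P (c m) i) \<le> P (c ?k) i"
            using P_str[OF i, of "c ?k \<leadsto> c m" "c ?k" "c m"] mp_le by blast
          have X3: "inf (inf e (c (Suc ?k))) (u ?k i) \<le> P (c m) i"
            using uS'[of m] by simp
          have "inf (inf e (c (Suc ?k))) (u ?k i) \<le> inf (c ?k \<leadsto> c m) (P (c m) i)"
            using X1 X3 by (rule le_infI)
          hence "inf (inf e (c (Suc ?k))) (u ?k i) \<le> P (c ?k) i"
            using X2 by (rule order_trans)
          then show ?thesis by (simp add: uS')
        qed
      qed
      have "inf (inf e (c (Suc ?k))) (c (Suc ?k)) \<le> c ?k"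
        using P0_str[OF all] by (simp add: c_def)
      then show "inf e (c (Suc ?k)) \<le> c ?k" by (simp add: inf_assoc)
    qed
  qed
  have fix_un: "vec_eq n (G (u n)) (u n)"
  proof (cases n)
    case 0 then show ?thesis by (simp add: vec_eq_def)
  next
    case (Suc m)
    show ?thesis unfolding vec_eq_def
    proof
      fix j assume j: "j \<in> {1..n}"
      have "card {j} \<le> card {i\<in>{1..n}. u n j \<le> u (Suc m) i}"
        by (rule card_mono) (use j Suc in auto)
      hence "n \<le> card {i\<in>{1..n}. u n j \<le> u (Suc m) i} + m" using Suc by simp
      hence "inf (u n j) (c n) \<le> c m" using R[of m] Suc by blast
      hence a: "u n j \<le> (c n \<leadsto> c m)" by (rule res[THEN iffD1])
      have "inf (c n \<leadsto> c m) (P (c m) j) \<le> P (c n) j"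
        using P_str[OF j, of "c n \<leadsto> c m" "c n" "c m"] mp_le by blast
      moreover have "u n j = P (c m) j" using Suc uS' by simp
      ultimately have "u n j \<le> P (c n) j" using a by (metis le_infI order_refl order_trans)
      hence "u n j \<le> G (u n) j" by (simp add: G_eq c_def)
      moreover have "G (u n) j \<le> u n j" using u_dec[of n] j by (simp add: vec_le_def G_eq uS)
      ultimately show "G (u n) j = u n j" by simp
    qed
  qed
  have gfp: "\<And>\<mu>. vec_eq n (G \<mu>) \<mu> \<Longrightarrow> vec_le n \<mu> (u k)" for k
  proof (induction k)
    case 0 then show ?case by (simp add: vec_le_def u0)
  next
    case (Suc k)
    have "vec_le n (G \<mu>) (G (u k))" using mono Suc by blast
    then show ?case using Suc.prems by (simp add: vec_le_def vec_eq_def G_eq uS)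
  qed
  have Ffix: "F (P0 (u n)) = P0 (u n)"
  proof -
    have "F (P0 (u n)) = P0 (G (u n))" by (simp add: F_eq G_eq)
    also have "\<dots> = P0 (u n)" using P0_cong[OF fix_un] .
    finally show ?thesis .
  qed
  have least: "\<And>a. F a = a \<Longrightarrow> P0 (u n) \<le> a"
  proof -
    fix a assume Fa: "F a = a"
    have "G (P a) = P a" using Fa by (simp add: G_eq F_eq)
    hence "vec_le n (P a) (u n)" using gfp by (simp add: vec_eq_def)
    hence "P0 (u n) \<le> P0 (P a)" by (rule P0_anti)
    then show "P0 (u n) \<le> a" using Fa F_eq by simp
  qed
  show ?thesis
    using mono fix_un gfp Ffix least unfolding P0_def by blast
qed

end
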